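(* Let $\mathbb A=(A_n)_{n\in\mathbb N}$ be a sequence of invertible linear operators on $\mathbb R^d$ and $\mathcal S=\{\|\cdot\|_n;\ n\in\mathbb N\}$ a sequence of norms on $\mathbb R^d$ such that there exist $K,a>0$ with $\|\mathcal A(m,n)x\|_m\le K(m/n)^a\|x\|_n$ and $\|\mathcal A(n,m)x\|_n\le K(m/n)^a\|x\|_m$ for all $m\ge n$ and $x$. Let $\mathbb B=(B_n)_{n\in\mathbb Z^+}$ with $B_n=\mathcal A(2^{n+1},2^n)$ and $\tilde{\mathcal S}=\{\|\cdot\|_{2^n};\ n\in\mathbb Z^+\}$. Then for every $\tau\in\mathbb R$, $$\tau\in\Sigma_{PD,\mathbb A,\mathcal S}\iff 2^\tau\in\Sigma_{ED,\mathbb B,\tilde{\mathcal S}}.$$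
   Context: $\mathbb N=\{1,2,\dots\}$, $\mathbb Z^+=\{0,1,\dots\}$. For invertible $(C_n)$, $\mathcal C(m,n)=C_{m-1}\cdots C_n$ ($m>n$), $\mathrm{Id}$ ($m=n$), $C_m^{-1}\cdots C_{n-1}^{-1}$ ($m<n$). Strong polynomial dichotomy of $(C_n)_{n\in\mathbb N}$ w.r.t. $\{\|\cdot\|_n\}$: there exist $K>0$, $a\ge\lambda>0$, projections $P_n$ with $C_nP_n=P_{n+1}C_n$ and, for $m\ge n$, $x$, $Q_m=\mathrm{Id}-P_m$: $\|\mathcal C(m,n)P_nx\|_m\le K(m/n)^{-\lambda}\|x\|_n$, $\|\mathcal C(n,m)Q_mx\|_n\le K(m/n)^{-\lambda}\|x\|_m$, $\|\mathcal C(m,n)x\|_m\le K(m/n)^a\|x\|_n$, $\|\mathcal C(n,m)x\|_n\le K(m/n)^a\|x\|_m$. Strong exponential dichotomy of $(C_n)_{n\in\mathbb Z^+}$ w.r.t. $\{|\cdot|_n\}$: same with $(m/n)^{-\lambda}$ replaced by $e^{-\lambda(m-n)}$ and $(m/n)^a$ by $e^{a(m-n)}$. $\Sigma_{PD,\mathbb A,\mathcal S}$: set of $\tau\in\mathbb R$ such that $(((n+1)/n)^{-\tau}A_n)_{n\in\mathbb N}$ does not admit a strong polynomial dichotomy w.r.t. $\mathcal S$. $\Sigma_{ED,\mathbb B,\tilde{\mathcal S}}$: set of $\tau>0$ such that $(\tau^{-1}B_n)_{n\in\mathbb Z^+}$ does not admit a strong exponential dichotomy w.r.t. $\tilde{\mathcal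 S}$. *)

theory Defs
  imports "HOL-Analysis.Analysis"
begin

definition is_norm :: "('a::real_vector \<Rightarrow> real) \<Rightarrow> bool" where
  "is_norm N \<longleftrightarrow> (\<forall>x. 0 \<le> N x) \<and> (\<forall>x. N x = 0 \<longleftrightarrow> x = 0)
     \<and> (\<forall>x y. N (x + y) \<le> N x + N y) \<and> (\<forall>c x. N (c *\<^sub>R x) = \<bar>c\<bar> * N x)"

fun fwd :: "(nat \<Rightarrow> 'a \<Rightarrow> 'a) \<Rightarrow> nat \<Rightarrow> nat \<Rightarrow> 'a \<Rightarrow> 'a" where
  "fwd C n 0 = id"
| "fwd C n (Suc k) = C (n + k) \<circ> fwd C n k"

definition cocycle :: "(nat \<Rightarrow> 'a \<Rightarrow> 'a) \<Rightarrow> nat \<Rightarrow> nat \<Rightarrow> 'a \<Rightarrow> 'a" where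
  "cocycle C m n = (if n \<le> m then fwd C n (m - n) else inv (fwd C m (n - m)))"

definition strong_poly_dich ::
  "(nat \<Rightarrow> 'a::real_vector \<Rightarrow> 'a) \<Rightarrow> (nat \<Rightarrow> 'a \<Rightarrow> real) \<Rightarrow> bool" where
  "strong_poly_dich C N \<longleftrightarrow>
    (\<exists>K a lam P. K > 0 \<and> a \<ge> lam \<and> lam > 0 \<and>
      (\<forall>n\<ge>1. linear (P n) \<and> P n \<circ> P n = P n \<and> C n \<circ> P n = P (n + 1) \<circ> C n) \<and>
      (\<forall>m n x. 1 \<le> n \<and> n \<le> m \<longrightarrow>
         N m (cocycle C m n (P n x)) \<le> K * (real m / real n) powr (- lam) * N n x \<and>
         N n (cocycle C n m (x - P m x)) \<le> K * (real m / real n) powr (- lam) * N m x \<and>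
         N m (cocycle C m n x) \<le> K * (real m / real n) powr a * N n x \<and>
         N n (cocycle C n m x) \<le> K * (real m / real n) powr a * N m x))"

definition strong_exp_dich ::
  "(nat \<Rightarrow> 'a::real_vector \<Rightarrow> 'a) \<Rightarrow> (nat \<Rightarrow> 'a \<Rightarrow> real) \<Rightarrow> bool" where
  "strong_exp_dich C N \<longleftrightarrow>
    (\<exists>K a lam P. K > 0 \<and> a \<ge> lam \<and> lam > 0 \<and>
      (\<forall>n. linear (P n) \<and> P n \<circ> P n = P n \<and> C n \<circ> P n = P (n + 1) \<circ> C n) \<and>
      (\<forall>m n x. n \<le> m \<longrightarrow>
         N m (cocycle C m n (P n x)) \<le> K * exp (- lam * (real m - real n)) * N n x \<and>
         N n (cocycle C n m (x - P m x)) \<le> K * exp (- lam * (real m - real n)) * N m x \<and>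
         N m (cocycle C m n x) \<le> K * exp (a * (real m - real n)) * N n x \<and>
         N n (cocycle C n m x) \<le> K * exp (a * (real m - real n)) * N m x))"

definition Sigma_PD :: "(nat \<Rightarrow> 'a::real_vector \<Rightarrow> 'a) \<Rightarrow> (nat \<Rightarrow> 'a \<Rightarrow> real) \<Rightarrow> real set" where
  "Sigma_PD A N = {\<tau>. \<not> strong_poly_dich
      (\<lambda>n x. ((real n + 1) / real n) powr (- \<tau>) *\<^sub>R A n x) N}"

definition Sigma_ED :: "(nat \<Rightarrow> 'a::real_vector \<Rightarrow> 'a) \<Rightarrow> (nat \<Rightarrow> 'a \<Rightarrow> real) \<Rightarrow> real set" where
  "Sigma_ED B N = {\<tau>. \<tau> > 0 \<and> \<not> strong_exp_dich (\<lambda>n x. inverse \<tau> *\<^sub>R B n x) N}"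

end

theory Submission
  imports Defs "HOL-Analysis.Analysis" "HOL-Library.Discrete_Functions"
begin


lemma fwd_add: "fwd C n (k + l) = fwd C (n + k) l \<circ> fwd C n k"
  by (induction l) (auto simp: add.assoc)

lemma linear_inv_bij:
  fixes f :: "'a::real_vector \<Rightarrow> 'b::real_vector"
  assumes "linear f" "bij f" shows "linear (inv f)"
proof (rule linearI)
  have s: "\<And>y. f (inv f y) = y" using assms(2) by (simp add: bij_is_surj surj_f_inv_f)
  have i: "\<And>x. inv f (f x) = x" using assms(2) by (simp add: bij_is_inj inv_f_f)
  fix x y :: 'b and r :: real
  have "inv f (x + y) = inv f (f (inv f x + inv f y))"
    using s linear_add[OF assms(1)] by metis
  then show "inv f (x + y) = inv f x + inv f y" using i by simp
  have "inv f (r *\<^sub>R x) = inv f (f (r *\<^sub>R inv f x))"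
    using s linear_cmul[OF assms(1)] by metis
  then show "inv f (r *\<^sub>R x) = r *\<^sub>R inv f x" using i by simp
qed

definition HB :: "(nat \<Rightarrow> 'a::real_vector \<Rightarrow> 'a) \<Rightarrow> nat \<Rightarrow> bool" where
  "HB C n0 \<longleftrightarrow> (\<forall>i\<ge>n0. linear (C i) \<and> bij (C i))"

lemma fwd_lb:
  assumes "HB C n0" "n0 \<le> n" shows "linear (fwd C n k) \<and> bij (fwd C n k)"
  using assms by (induction k) (auto simp: HB_def linear_compose bij_comp real_vector.linear_id)

lemma coc_rep:
  assumes H: "HB C n0" and "n0 \<le> i" "n0 \<le> j"
  shows "cocycle C i j = cocycle C i n0 \<circ> inv (cocycle C j n0)"
proof (cases "j \<le> i")
  case True
  have e: "fwd C n0 (i - n0) = fwd C j (i - j) \<circ> fwd C n0 (j - n0)"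
    using fwd_add[of C n0 "j - n0" "i - j"] True assms by simp
  have b: "bij (fwd C n0 (j - n0))" using fwd_lb[OF H] by simp
  have fi: "fwd C n0 (j - n0) \<circ> inv (fwd C n0 (j - n0)) = id"
    using b surj_iff bij_is_surj by blast
  show ?thesis using True assms unfolding cocycle_def e
    by (simp add: comp_assoc fi)
next
  case False
  have e: "fwd C n0 (j - n0) = fwd C i (j - i) \<circ> fwd C n0 (i - n0)"
    using fwd_add[of C n0 "i - n0" "j - i"] False assms by simp
  have b1: "bij (fwd C n0 (i - n0))" using fwd_lb[OF H] by simp
  have b2: "bij (fwd C i (j - i))" using fwd_lb[OF H] assms by simp
  have "cocycle C i n0 \<circ> inv (cocycle C j n0) = fwd C n0 (i - n0) \<circ> (inv (fwd C n0 (i - n0)) \<circ> inv (fwd C i (j - i)))"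
    using assms by (simp add: cocycle_def e o_inv_distrib[OF b2 b1])
  also have "\<dots> = inv (fwd C i (j - i))"
  proof -
    have fi: "fwd C n0 (i - n0) \<circ> inv (fwd C n0 (i - n0)) = id"
      using b1 surj_iff bij_is_surj by blast
    show ?thesis by (simp add: comp_assoc[symmetric] fi)
  qed
  finally show ?thesis using False unfolding cocycle_def by simp
qed

lemma coc_lb:
  assumes H: "HB C n0" and "n0 \<le> i" "n0 \<le> j"
  shows "linear (cocycle C i j) \<and> bij (cocycle C i j)"
proof -
  have a: "linear (cocycle C k n0) \<and> bij (cocycle C k n0)" if "n0 \<le> k" for k
    using fwd_lb[OF H, of n0] that by (simp add: cocycle_def)
  show ?thesis unfolding coc_rep[OF assms]
    using a[OF assms(2)] a[OF assms(3)]
    by (simp add: linear_compose bij_comp linear_inv_bij bij_imp_bij_inv)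
qed

lemma coc_id: "cocycle C i i = id" by (simp add: cocycle_def)

lemma coc_comp:
  assumes H: "HB C n0" and "n0 \<le> i" "n0 \<le> j" "n0 \<le> k"
  shows "cocycle C i j (cocycle C j k x) = cocycle C i k x"
proof -
  have b: "bij (cocycle C j n0)" using coc_lb[OF H, of j n0] assms by simp
  then have "inv (cocycle C j n0) (cocycle C j n0 y) = y" for y by (simp add: bij_is_inj inv_f_f)
  then show ?thesis using assms coc_rep[OF H, of i j] coc_rep[OF H, of j k] coc_rep[OF H, of i k]
    by simp
qed



lemma scale_bij:
  fixes f :: "'a::real_vector \<Rightarrow> 'a"
  assumes c: "c \<noteq> 0" and l: "linear f" and b: "bij f"
  shows "linear (\<lambda>x. c *\<^sub>R f x) \<and> bij (\<lambda>x. c *\<^sub>R f x)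
    \<and> inv (\<lambda>x. c *\<^sub>R f x) = (\<lambda>y. inverse c *\<^sub>R inv f y)"
proof -
  have s: "\<And>y. f (inv f y) = y" using b by (simp add: bij_is_surj surj_f_inv_f)
  have i: "\<And>x. inv f (f x) = x" using b by (simp add: bij_is_inj inv_f_f)
  have 1: "(\<lambda>x. c *\<^sub>R f x) \<circ> (\<lambda>y. inverse c *\<^sub>R inv f y) = id"
    using c by (auto simp: fun_eq_iff linear_cmul[OF l] s)
  have 2: "(\<lambda>y. inverse c *\<^sub>R inv f y) \<circ> (\<lambda>x. c *\<^sub>R f x) = id"
    using c by (auto simp: fun_eq_iff linear_cmul[OF l, symmetric] i)
  have "linear (\<lambda>x. c *\<^sub>R f x)"
    using l by (intro linearI) (auto simp: linear_add linear_cmul scaleR_add_right)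
  then show ?thesis using o_bij[OF 2 1] inv_unique_comp[OF 1 2] by simp
qed

lemma HB_scale:
  assumes "HB C n0" "\<And>i. i \<ge> n0 \<Longrightarrow> c i \<noteq> 0"
  shows "HB (\<lambda>i x. c i *\<^sub>R C i x) n0"
  using assms scale_bij unfolding HB_def by blast

lemma fwd_scale:
  assumes H: "HB C n0" and "n0 \<le> n"
    and cg: "\<And>i. i \<ge> n0 \<Longrightarrow> c i = g (Suc i) / g i"
    and g: "\<And>i. i \<ge> n0 \<Longrightarrow> g i > 0"
  shows "fwd (\<lambda>i x. c i *\<^sub>R C i x) n k x = (g (n + k) / g n) *\<^sub>R fwd C n k x"
proof (induction k)
  case 0 then show ?case using g[OF assms(2)] by simp
next
  case (Suc k)
  have l: "linear (C (n + k))" using H assms(2) by (simp add: HB_def)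
  have "g (n + k) > 0" using g assms(2) by simp
  then have e: "c (n + k) * (g (n + k) / g n) = g (n + Suc k) / g n"
    using cg[of "n+k"] assms(2) by (simp add: field_simps)
  have e2: "c (n + k) * g (n + k) = g (Suc (n + k))"
    using cg[of "n+k"] assms(2) \<open>g (n + k) > 0\<close> by (simp add: field_simps)
  show ?case using Suc by (simp add: linear_cmul[OF l] e e2)
qed

lemma coc_scale:
  assumes H: "HB C n0" and "n0 \<le> i" "n0 \<le> j"
    and cg: "\<And>i. i \<ge> n0 \<Longrightarrow> c i = g (Suc i) / g i"
    and g: "\<And>i. i \<ge> n0 \<Longrightarrow> g i > 0"
  shows "cocycle (\<lambda>i x. c i *\<^sub>R C i x) i j = (\<lambda>x. (g i / g j) *\<^sub>R cocycle C i j x)"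
proof (cases "j \<le> i")
  case True
  then show ?thesis using fwd_scale[where c=c and g=g, OF H assms(3) cg g] by (auto simp: cocycle_def fun_eq_iff)
next
  case False
  have f: "fwd (\<lambda>i x. c i *\<^sub>R C i x) i (j - i) = (\<lambda>x. (g j / g i) *\<^sub>R fwd C i (j - i) x)"
    using fwd_scale[where c=c and g=g, OF H assms(2) cg g] False by (auto simp: fun_eq_iff)
  have lb: "linear (fwd C i (j - i)) \<and> bij (fwd C i (j - i))" using fwd_lb[OF H assms(2)] .
  have "g j / g i \<noteq> 0" using g[OF assms(2)] g[OF assms(3)] by simp
  from scale_bij[OF this, of "fwd C i (j - i)"] lb have "inv (\<lambda>x. (g j / g i) *\<^sub>R fwd C i (j - i) x)
     = (\<lambda>y. (g i / g j) *\<^sub>R inv (fwd C i (j - i)) y)" by simp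
  then show ?thesis using False f by (simp add: cocycle_def)
qed

lemma coc_pow2:
  assumes H: "HB A 1" and B: "\<And>n. B n = cocycle A (2 ^ Suc n) (2 ^ n)"
  shows "cocycle B m n = cocycle A (2 ^ m) (2 ^ n)"
proof -
  have f: "fwd B n k = cocycle A (2 ^ (n + k)) (2 ^ n)" for n k
  proof (induction k)
    case 0 then show ?case by (simp add: coc_id)
  next
    case (Suc k)
    show ?case using Suc coc_comp[OF H, of "2 ^ Suc (n + k)" "2 ^ (n + k)" "2 ^ n"]
      by (simp add: B fun_eq_iff)
  qed
  show ?thesis
  proof (cases "n \<le> m")
    case True then show ?thesis by (simp add: cocycle_def f)
  next
    case False
    have "inv (cocycle A (2 ^ n) (2 ^ m)) = cocycle A (2 ^ m) (2 ^ n)"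
      by (rule inv_unique_comp) (auto simp: fun_eq_iff coc_comp[OF H] coc_id)
    then show ?thesis using False by (simp add: cocycle_def f)
  qed
qed

lemma HB_pow2:
  assumes H: "HB A 1"
  shows "HB (\<lambda>n. cocycle A (2 ^ Suc n) (2 ^ n)) 0"
  using coc_lb[OF H] by (simp add: HB_def)



lemma p2: "(real (2 ^ m) / real (2 ^ n)) powr e = exp (e * ln 2 * (real m - real n))"
proof -
  have "real (2 ^ m) / real (2 ^ n) = 2 powr (real m - real n)"
    by (simp add: powr_diff powr_realpow)
  then show ?thesis by (simp add: powr_powr powr_def mult_ac)
qed

lemma ch: "(A::real) \<le> p * B \<Longrightarrow> B \<le> q * Cc \<Longrightarrow> 0 \<le> p \<Longrightarrow> A \<le> p * q * Cc"
  by (metis mult.assoc mult_left_mono order_trans)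

context
  fixes C D :: "nat \<Rightarrow> 'a::real_vector \<Rightarrow> 'a" and N :: "nat \<Rightarrow> 'a \<Rightarrow> real" and Kb b :: real
  assumes HC: "HB C 1" and DC: "\<And>m n. cocycle D m n = cocycle C (2^m) (2^n)"
    and norms: "\<And>n. n \<ge> 1 \<Longrightarrow> is_norm (N n)"
    and Kb: "Kb > 0" and bpos: "b > 0"
    and gr: "\<And>m n x. 1 \<le> n \<Longrightarrow> n \<le> m \<Longrightarrow> N m (cocycle C m n x) \<le> Kb * (real m / real n) powr b * N n x"
    and gr': "\<And>m n x. 1 \<le> n \<Longrightarrow> n \<le> m \<Longrightarrow> N n (cocycle C n m x) \<le> Kb * (real m / real n) powr b * N m x"
begin

abbreviation "F \<equiv> cocycle C"

lemma Fc: "1 \<le> i \<Longrightarrow> 1 \<le> j \<Longrightarrow> 1 \<le> k \<Longrightarrow> F i j (F j k x) = F i k x"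
  using coc_comp[OF HC] by blast

lemma Fl: "1 \<le> i \<Longrightarrow> 1 \<le> j \<Longrightarrow> linear (F i j)"
  using coc_lb[OF HC] by blast

lemma Fid: "F i i x = x" by (simp add: coc_id)

lemma Cn: "C n = F (Suc n) n" by (simp add: cocycle_def)

lemma Dn: "D n = F (2 ^ Suc n) (2 ^ n)"
  using DC[of "Suc n" n] by (simp add: cocycle_def)

lemma Nnn: "n \<ge> 1 \<Longrightarrow> 0 \<le> N n x" using norms by (simp add: is_norm_def)

lemma pd_to_ed:
  assumes "strong_poly_dich C N"
  shows "strong_exp_dich D (\<lambda>n. N (2 ^ n))"
proof -
  obtain K a lam P where K: "K > 0" and al: "a \<ge> lam" "lam > 0"
    and PP: "\<forall>n\<ge>1. linear (P n) \<and> P n \<circ> P n = P n \<and> C n \<circ> P n = P (n + 1) \<circ> C n"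
    and BB: "\<forall>m n x. 1 \<le> n \<and> n \<le> m \<longrightarrow>
         N m (cocycle C m n (P n x)) \<le> K * (real m / real n) powr (- lam) * N n x \<and>
         N n (cocycle C n m (x - P m x)) \<le> K * (real m / real n) powr (- lam) * N m x \<and>
         N m (cocycle C m n x) \<le> K * (real m / real n) powr a * N n x \<and>
         N n (cocycle C n m x) \<le> K * (real m / real n) powr a * N m x"
    using assms unfolding strong_poly_dich_def by blast
  have inv1: "C n (P n x) = P (Suc n) (C n x)" if "n \<ge> 1" for n x
    using PP that by (metis Suc_eq_plus1 comp_apply)
  have invk: "F (n + k) n (P n x) = P (n + k) (F (n + k) n x)" if "n \<ge> 1" for n k x
  proof (induction k arbitrary: x)
    case 0 then show ?case by (simp add: Fid)
  next
    case (Suc k)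
    have "F (n + Suc k) n y = C (n + k) (F (n + k) n y)" for y
      using Fc[of "Suc (n + k)" "n + k" n y] that by (simp add: Cn)
    then show ?case using Suc inv1[of "n + k"] that by simp
  qed
  have invm: "F m n (P n x) = P m (F m n x)" if "n \<ge> 1" "n \<le> m" for m n x
    using invk[OF that(1), of "m - n"] that by simp
  define Q where "Q n = P (2 ^ n)" for n :: nat
  define lam' where "lam' = lam * ln 2"
  define a' where "a' = a * ln 2"
  have ln2: "ln (2::real) > 0" by simp
  show ?thesis unfolding strong_exp_dich_def
  proof (intro exI conjI allI impI)
    show "K > 0" by (rule K)
    show "lam' \<le> a'" unfolding lam'_def a'_def using al ln2 by simp
    show "lam' > 0" unfolding lam'_def using al ln2 by simp
    fix n :: nat
    have p1: "(1::nat) \<le> 2 ^ n" by simp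
    show "linear (Q n)" "Q n \<circ> Q n = Q n" unfolding Q_def using PP p1 by blast+
    show "D n \<circ> Q n = Q (n + 1) \<circ> D n"
      unfolding Q_def Dn using invm[OF p1, of "2 ^ Suc n"] by (auto simp: fun_eq_iff)
  next
    fix m n :: nat and x
    assume nm: "n \<le> m"
    have p1: "(1::nat) \<le> 2 ^ n" by simp
    have nm2: "(2::nat) ^ n \<le> 2 ^ m" using nm by (simp add: power_increasing)
    have e1: "(real (2 ^ m) / real (2 ^ n)) powr (- lam) = exp (- lam' * (real m - real n))"
      unfolding p2 lam'_def by (simp add: mult_ac)
    have e2: "(real (2 ^ m) / real (2 ^ n)) powr a = exp (a' * (real m - real n))"
      unfolding p2 a'_def by (simp add: mult_ac)
    note B = BB[rule_format, OF conjI[OF p1 nm2], of x]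
    show "N (2 ^ m) (cocycle D m n (Q n x)) \<le> K * exp (- lam' * (real m - real n)) * N (2 ^ n) x"
      using B e1 by (simp add: DC Q_def)
    show "N (2 ^ n) (cocycle D n m (x - Q m x)) \<le> K * exp (- lam' * (real m - real n)) * N (2 ^ m) x"
      using B e1 by (simp add: DC Q_def)
    show "N (2 ^ m) (cocycle D m n x) \<le> K * exp (a' * (real m - real n)) * N (2 ^ n) x"
      using B e2 by (simp add: DC)
    show "N (2 ^ n) (cocycle D n m x) \<le> K * exp (a' * (real m - real n)) * N (2 ^ m) x"
      using B e2 by (simp add: DC)
  qed
qed

lemma ed_to_pd:
  assumes "strong_exp_dich D (\<lambda>n. N (2 ^ n))"
  shows "strong_poly_dich C N"
proof -
  obtain K a lam Q where K: "K > 0" and al: "a \<ge> lam" "lam > 0"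
    and QQ: "\<forall>n. linear (Q n) \<and> Q n \<circ> Q n = Q n \<and> D n \<circ> Q n = Q (n + 1) \<circ> D n"
    and BB: "\<forall>m n x. n \<le> m \<longrightarrow>
         N (2 ^ m) (cocycle D m n (Q n x)) \<le> K * exp (- lam * (real m - real n)) * N (2 ^ n) x \<and>
         N (2 ^ n) (cocycle D n m (x - Q m x)) \<le> K * exp (- lam * (real m - real n)) * N (2 ^ m) x \<and>
         N (2 ^ m) (cocycle D m n x) \<le> K * exp (a * (real m - real n)) * N (2 ^ n) x \<and>
         N (2 ^ n) (cocycle D n m x) \<le> K * exp (a * (real m - real n)) * N (2 ^ m) x"
    using assms unfolding strong_exp_dich_def by blast
  have p1: "(1::nat) \<le> 2 ^ n" for n by simp
  have inv1: "F (2 ^ Suc n) (2 ^ n) (Q n x) = Q (Suc n) (F (2 ^ Suc n) (2 ^ n) x)" for n x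
    using QQ by (metis Dn Suc_eq_plus1 comp_apply)
  have invk: "F (2 ^ (i + k)) (2 ^ i) (Q i x) = Q (i + k) (F (2 ^ (i + k)) (2 ^ i) x)" for i k x
  proof (induction k arbitrary: x)
    case 0 then show ?case by (simp add: Fid)
  next
    case (Suc k)
    have "F (2 ^ (i + Suc k)) (2 ^ i) y = F (2 ^ Suc (i + k)) (2 ^ (i + k)) (F (2 ^ (i + k)) (2 ^ i) y)" for y
      using Fc[OF p1 p1 p1, of "Suc (i + k)" "i + k" i y] by simp
    then show ?case using Suc inv1[of "i + k"] by simp
  qed
  have comm: "Q j (F (2 ^ j) (2 ^ i) y) = F (2 ^ j) (2 ^ i) (Q i y)" for i j y
  proof (cases "i \<le> j")
    case True then show ?thesis using invk[of i "j - i" y] by simp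
  next
    case False
    have "Q j (F (2 ^ j) (2 ^ i) y) = F (2 ^ j) (2 ^ i) (F (2 ^ i) (2 ^ j) (Q j (F (2 ^ j) (2 ^ i) y)))"
      using Fc[OF p1 p1 p1, of j i j] by (simp add: Fid)
    also have "\<dots> = F (2 ^ j) (2 ^ i) (Q i (F (2 ^ i) (2 ^ j) (F (2 ^ j) (2 ^ i) y)))"
      using invk[of j "i - j"] False by simp
    also have "\<dots> = F (2 ^ j) (2 ^ i) (Q i y)"
      using Fc[OF p1 p1 p1, of i j i] by (simp add: Fid)
    finally show ?thesis .
  qed
  define L where "L = floor_log"
  define e where "e m = (2::nat) ^ L m" for m
  have e1: "1 \<le> e m" for m unfolding e_def by simp
  have em: "e m \<le> m" if "m \<ge> 1" for m unfolding e_def L_def using floor_log_exp2_le that by simp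
  have em2: "real m \<le> 2 * real (e m)" for m
    unfolding e_def L_def using floor_log_exp2_ge[of m] by (metis of_nat_le_iff of_nat_mult of_nat_numeral)
  have em3: "real m < 2 * 2 ^ L m" for m
    unfolding L_def using floor_log_exp2_gt[of m] by (metis of_nat_less_iff of_nat_mult of_nat_numeral of_nat_power)
  have Lmono: "L n \<le> L m" if "n \<le> m" for n m unfolding L_def using floor_log_le_iff that by blast
  define P where "P m x = F m (e m) (Q (L m) (F (e m) m x))" for m x
  have Pinv: "F m n (P n x) = P m (F m n x)" if "1 \<le> m" "1 \<le> n" for m n x
  proof -
    have "P m (F m n x) = F m (e m) (Q (L m) (F (e m) (e n) (F (e n) n x)))"
      unfolding P_def using Fc that e1 by simp
    also have "\<dots> = F m (e m) (F (e m) (e n) (Q (L n) (F (e n) n x)))"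
      using comm unfolding e_def by simp
    also have "\<dots> = F m n (P n x)"
      unfolding P_def using Fc that e1 by simp
    finally show ?thesis by simp
  qed
  define c2 where "c2 = Kb * 2 powr b"
  have c2: "c2 \<ge> 0" unfolding c2_def using Kb by simp
  have rat: "(real m / real (e m)) powr b \<le> 2 powr b" if "m \<ge> 1" for m
  proof -
    have "real m / real (e m) \<le> 2" using em2[of m] e1[of m] by (simp add: divide_le_eq)
    then show ?thesis using bpos by (intro powr_mono2) auto
  qed
  have gre1: "N m (F m (e m) y) \<le> c2 * N (e m) y" if "m \<ge> 1" for m y
  proof -
    have "N m (F m (e m) y) \<le> Kb * (real m / real (e m)) powr b * N (e m) y"
      using gr[OF e1 em[OF that]] .
    also have "\<dots> \<le> c2 * N (e m) y" unfolding c2_def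
      using rat[OF that] Kb Nnn[OF e1] by (intro mult_right_mono mult_left_mono) auto
    finally show ?thesis .
  qed
  have gre2: "N (e m) (F (e m) m y) \<le> c2 * N m y" if "m \<ge> 1" for m y
  proof -
    have "N (e m) (F (e m) m y) \<le> Kb * (real m / real (e m)) powr b * N m y"
      using gr'[OF e1 em[OF that]] .
    also have "\<dots> \<le> c2 * N m y" unfolding c2_def
      using rat[OF that] Kb Nnn[OF that] by (intro mult_right_mono mult_left_mono) auto
    finally show ?thesis .
  qed
  define lam' where "lam' = lam / ln 2"
  have ln2: "ln (2::real) > 0" by simp
  have expb: "exp (- lam * (real (L m) - real (L n))) \<le> exp lam * (real m / real n) powr (- lam')"
    if "1 \<le> n" "n \<le> m" for m n
  proof -
    have "real m / real n \<le> real (2 ^ (L m + 1)) / real (2 ^ L n)"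
    proof -
      have "real (2 ^ L n) \<le> real n" using em[OF that(1)] unfolding e_def by linarith
      moreover have "real m \<le> real (2 ^ (L m + 1))" using em3[of m] by simp
      ultimately show ?thesis using that by (intro frac_le) auto
    qed
    then have "(real (2 ^ (L m + 1)) / real (2 ^ L n)) powr (- lam') \<le> (real m / real n) powr (- lam')"
      using that al unfolding lam'_def by (intro powr_mono2') auto
    moreover have "(real (2 ^ (L m + 1)) / real (2 ^ L n)) powr (- lam') = exp (- lam) * exp (- lam * (real (L m) - real (L n)))"
      unfolding p2 lam'_def using ln2 by (simp add: exp_add[symmetric] algebra_simps)
    ultimately have "exp (- lam) * exp (- lam * (real (L m) - real (L n))) \<le> (real m / real n) powr (- lam')" by simp
    then show ?thesis by (simp add: exp_minus field_simps)
  qed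
  define K1 where "K1 = c2 * K * c2 * exp lam"
  define K' where "K' = max Kb K1"
  define a' where "a' = max b lam'"
  have K'pos: "K' > 0" unfolding K'_def using Kb by simp
  show ?thesis unfolding strong_poly_dich_def
  proof (intro exI conjI allI impI)
    show "K' > 0" by (rule K'pos)
    show "lam' \<le> a'" unfolding a'_def by simp
    show "lam' > 0" unfolding lam'_def using al ln2 by simp
  next
    fix n :: nat assume n1: "1 \<le> n"
    show "linear (P n)"
    proof -
      have "P n = F n (e n) \<circ> Q (L n) \<circ> F (e n) n" unfolding P_def by (simp add: fun_eq_iff)
      then show ?thesis using Fl[OF n1 e1] Fl[OF e1 n1] QQ by (simp add: linear_compose)
    qed
    show "P n \<circ> P n = P n"
    proof -
      have "Q (L n) (Q (L n) z) = Q (L n) z" for z using QQ by (metis comp_apply)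
      then show ?thesis unfolding P_def fun_eq_iff using Fc[OF e1 n1 e1] by (simp add: Fid)
    qed
    show "C n \<circ> P n = P (n + 1) \<circ> C n"
      using Pinv[of "Suc n" n] n1 by (simp add: Cn fun_eq_iff)
  next
    fix m n :: nat and x
    assume "1 \<le> n \<and> n \<le> m"
    then have n1: "1 \<le> n" and nm: "n \<le> m" and m1: "1 \<le> m" by auto
    define R where "R = (real m / real n) powr (- lam')"
    have R0: "R \<ge> 0" unfolding R_def by simp
    have LL: "L n \<le> L m" using Lmono[OF nm] .
    define E where "E = exp (- lam * (real (L m) - real (L n)))"
    have E: "E \<le> exp lam * R" unfolding E_def R_def using expb[OF n1 nm] .
    have E0: "E \<ge> 0" unfolding E_def by simp
    have eLm: "e m = 2 ^ L m" "e n = 2 ^ L n" unfolding e_def by auto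
    have fin: "c2 * (K * E * (c2 * Z)) \<le> K' * R * Z" if "Z \<ge> 0" for Z
    proof -
      have "c2 * (K * E * (c2 * Z)) = (c2 * K * c2 * Z) * E" by (simp add: mult_ac)
      also have "\<dots> \<le> (c2 * K * c2 * Z) * (exp lam * R)"
        using E c2 K that by (intro mult_left_mono) auto
      also have "\<dots> = K1 * R * Z" unfolding K1_def by (simp add: mult_ac)
      also have "\<dots> \<le> K' * R * Z" unfolding K'_def using R0 that
        by (intro mult_right_mono) auto
      finally show ?thesis .
    qed
    show "N m (F m n (P n x)) \<le> K' * R * N n x"
    proof -
      define y where "y = F (e n) n x"
      define u where "u = F (e m) (e n) (Q (L n) y)"
      have eq: "F m n (P n x) = F m (e m) u"
        unfolding P_def u_def y_def using Fc m1 n1 e1 by simp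
      have b1: "N (e m) u \<le> K * E * N (e n) y"
        using BB[rule_format, OF LL, of y] unfolding u_def E_def by (simp add: DC eLm)
      have "N m (F m (e m) u) \<le> c2 * N (e m) u" by (rule gre1[OF m1])
      also have "\<dots> \<le> c2 * (K * E * N (e n) y)" using b1 c2 by (rule mult_left_mono)
      also have "\<dots> \<le> c2 * (K * E * (c2 * N n x))"
        unfolding y_def using gre2[OF n1] c2 K E0
        by (intro mult_left_mono) auto
      also have "\<dots> \<le> K' * R * N n x" using fin Nnn[OF n1] by blast
      finally show ?thesis using eq by simp
    qed
    show "N n (F n m (x - P m x)) \<le> K' * R * N m x"
    proof -
      define z where "z = F (e m) m x"
      define v where "v = F (e n) (e m) (z - Q (L m) z)"
      have xz: "x = F m (e m) z" unfolding z_def using Fc[OF m1 e1 m1] by (simp add: Fid)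
      have "x - P m x = F m (e m) (z - Q (L m) z)"
        unfolding P_def z_def[symmetric] using xz linear_diff[OF Fl[OF m1 e1]] by simp
      then have eq: "F n m (x - P m x) = F n (e n) v"
        unfolding v_def using Fc m1 n1 e1 by simp
      have b1: "N (e n) v \<le> K * E * N (e m) z"
        using BB[rule_format, OF LL, of z] unfolding v_def E_def by (simp add: DC eLm)
      have "N n (F n (e n) v) \<le> c2 * N (e n) v" by (rule gre1[OF n1])
      also have "\<dots> \<le> c2 * (K * E * N (e m) z)" using b1 c2 by (rule mult_left_mono)
      also have "\<dots> \<le> c2 * (K * E * (c2 * N m x))"
        unfolding z_def using gre2[OF m1] c2 K E0
        by (intro mult_left_mono) auto
      also have "\<dots> \<le> K' * R * N m x" using fin Nnn[OF m1] by blast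
      finally show ?thesis using eq by simp
    qed
    have rb: "Kb * (real m / real n) powr b \<le> K' * (real m / real n) powr a'"
    proof -
      have "(real m / real n) powr b \<le> (real m / real n) powr a'"
        using n1 nm unfolding a'_def by (intro powr_mono) auto
      then show ?thesis unfolding K'_def using Kb by (intro mult_mono) auto
    qed
    show "N m (F m n x) \<le> K' * (real m / real n) powr a' * N n x"
      using gr[OF n1 nm, of x] mult_right_mono[OF rb Nnn[OF n1, of x]] by linarith
    show "N n (F n m x) \<le> K' * (real m / real n) powr a' * N m x"
      using gr'[OF n1 nm, of x] mult_right_mono[OF rb Nnn[OF m1, of x]] by linarith
  qed
qed

lemma pd_iff_ed: "strong_poly_dich C N \<longleftrightarrow> strong_exp_dich D (\<lambda>n. N (2 ^ n))"
  using pd_to_ed ed_to_pd by blast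

end


theorem corollary2p1:
  fixes A :: "nat \<Rightarrow> real ^ 'd \<Rightarrow> real ^ 'd"
    and N :: "nat \<Rightarrow> real ^ 'd \<Rightarrow> real"
    and \<tau> :: real
  assumes inv_lin: "\<And>n. n \<ge> 1 \<Longrightarrow> linear (A n) \<and> bij (A n)"
    and norms: "\<And>n. n \<ge> 1 \<Longrightarrow> is_norm (N n)"
    and bdd: "\<exists>K a. K > 0 \<and> a > 0 \<and> (\<forall>m n x. 1 \<le> n \<and> n \<le> m \<longrightarrow>
               N m (cocycle A m n x) \<le> K * (real m / real n) powr a * N n x \<and>
               N n (cocycle A n m x) \<le> K * (real m / real n) powr a * N m x)"
  shows "\<tau> \<in> Sigma_PD A N \<longleftrightarrow>
         2 powr \<tau> \<in> Sigma_ED (\<lambda>n. cocycle A (2 ^ (n + 1)) (2 ^ n)) (\<lambda>n. N (2 ^ n))"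
proof -
  define C where "C = (\<lambda>n x. ((real n + 1) / real n) powr (- \<tau>) *\<^sub>R A n x)"
  define B where "B = (\<lambda>n. cocycle A (2 ^ Suc n) (2 ^ n))"
  define D where "D = (\<lambda>n x. inverse (2 powr \<tau>) *\<^sub>R B n x)"
  define gC where "gC i = real i powr (- \<tau>)" for i :: nat
  define gD where "gD i = (2::real) powr (- \<tau> * real i)" for i :: nat
  have HA: "HB A 1" using inv_lin by (simp add: HB_def)
  have cC: "((real i + 1) / real i) powr (- \<tau>) = gC (Suc i) / gC i" if "i \<ge> 1" for i
    unfolding gC_def by (simp add: powr_divide add.commute)
  have gCp: "gC i > 0" if "i \<ge> 1" for i unfolding gC_def using that by simp
  have HC: "HB C 1" unfolding C_def
    by (rule HB_scale[OF HA]) simp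
  have cocC: "cocycle C i j = (\<lambda>x. (gC i / gC j) *\<^sub>R cocycle A i j x)" if "1 \<le> i" "1 \<le> j" for i j
    unfolding C_def using coc_scale[where c = "\<lambda>i. ((real i + 1) / real i) powr (- \<tau>)" and g = gC,
        OF HA that cC gCp] by simp
  have HB': "HB B 0" unfolding B_def using HB_pow2[OF HA] .
  have cD: "inverse (2 powr \<tau>) = gD (Suc i) / gD i" for i
  proof -
    have "gD (Suc i) / gD i = 2 powr (- \<tau> * real (Suc i) - (- \<tau> * real i))"
      by (simp only: gD_def powr_diff)
    also have "\<dots> = 2 powr (- \<tau>)" by (simp add: algebra_simps)
    finally show ?thesis by (simp add: powr_minus)
  qed
  have gDp: "gD i > 0" for i unfolding gD_def by simp
  have cocD: "cocycle D m n = (\<lambda>x. (gD m / gD n) *\<^sub>R cocycle A (2 ^ m) (2 ^ n) x)" for m n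
  proof -
    have "cocycle D m n = (\<lambda>x. (gD m / gD n) *\<^sub>R cocycle B m n x)"
      unfolding D_def using coc_scale[where c = "\<lambda>i. inverse (2 powr \<tau>)" and g = gD,
        OF HB' _ _ cD gDp] by simp
    then show ?thesis using coc_pow2[OF HA, of B] by (simp add: B_def)
  qed
  have g2: "gC (2 ^ m) = gD m" for m
    unfolding gC_def gD_def by (simp add: powr_realpow[symmetric] powr_powr mult_ac)
  have DC: "cocycle D m n = cocycle C (2 ^ m) (2 ^ n)" for m n
    using cocD[of m n] cocC[of "2 ^ m" "2 ^ n"] by (simp add: g2)
  obtain K a where K: "K > 0" "a > 0" and bd: "\<forall>m n x. 1 \<le> n \<and> n \<le> m \<longrightarrow>
               N m (cocycle A m n x) \<le> K * (real m / real n) powr a * N n x \<and>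
               N n (cocycle A n m x) \<le> K * (real m / real n) powr a * N m x"
    using bdd by blast
  have Nn: "N n (c *\<^sub>R x) = \<bar>c\<bar> * N n x" "N n x \<ge> 0" if "n \<ge> 1" for n c x
    using norms[OF that] by (auto simp: is_norm_def)
  have bpos: "a + \<bar>\<tau>\<bar> > 0" using K by simp
  have gr: "N m (cocycle C m n x) \<le> K * (real m / real n) powr (a + \<bar>\<tau>\<bar>) * N n x"
    and gr': "N n (cocycle C n m x) \<le> K * (real m / real n) powr (a + \<bar>\<tau>\<bar>) * N m x"
    if "1 \<le> n" "n \<le> m" for m n x
  proof -
    have m1: "1 \<le> m" using that by simp
    have r1: "real m / real n \<ge> 1" using that by simp
    have q1: "gC m / gC n = (real m / real n) powr (- \<tau>)" unfolding gC_def by (simp add: powr_divide)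
    have q2: "gC n / gC m = (real m / real n) powr \<tau>" unfolding gC_def
      using that by (simp add: powr_divide powr_minus divide_simps)
    have s1: "(real m / real n) powr (- \<tau>) \<le> (real m / real n) powr \<bar>\<tau>\<bar>"
      using r1 by (intro powr_mono) auto
    have s2: "(real m / real n) powr \<tau> \<le> (real m / real n) powr \<bar>\<tau>\<bar>"
      using r1 by (intro powr_mono) auto
    have pa: "(real m / real n) powr (a + \<bar>\<tau>\<bar>) = (real m / real n) powr \<bar>\<tau>\<bar> * (real m / real n) powr a"
      by (simp add: powr_add)
    have A1: "N m (cocycle A m n x) \<le> K * (real m / real n) powr a * N n x"
      and A2: "N n (cocycle A n m x) \<le> K * (real m / real n) powr a * N m x"
      using bd that by auto
    have "N m (cocycle C m n x) = (real m / real n) powr (- \<tau>) * N m (cocycle A m n x)"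
      using cocC[OF m1 that(1)] q1 Nn(1)[OF m1] by simp
    also have "\<dots> \<le> (real m / real n) powr \<bar>\<tau>\<bar> * (K * (real m / real n) powr a * N n x)"
      using s1 A1 Nn(2)[OF m1] by (intro mult_mono) auto
    also have "\<dots> = K * (real m / real n) powr (a + \<bar>\<tau>\<bar>) * N n x" unfolding pa by (simp add: mult_ac)
    finally show "N m (cocycle C m n x) \<le> K * (real m / real n) powr (a + \<bar>\<tau>\<bar>) * N n x" .
    have "N n (cocycle C n m x) = (real m / real n) powr \<tau> * N n (cocycle A n m x)"
      using cocC[OF that(1) m1] q2 Nn(1)[OF that(1)] by simp
    also have "\<dots> \<le> (real m / real n) powr \<bar>\<tau>\<bar> * (K * (real m / real n) powr a * N m x)"
      using s2 A2 Nn(2)[OF that(1)] by (intro mult_mono) auto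
    also have "\<dots> = K * (real m / real n) powr (a + \<bar>\<tau>\<bar>) * N m x" unfolding pa by (simp add: mult_ac)
    finally show "N n (cocycle C n m x) \<le> K * (real m / real n) powr (a + \<bar>\<tau>\<bar>) * N m x" .
  qed
  have main: "strong_poly_dich C N \<longleftrightarrow> strong_exp_dich D (\<lambda>n. N (2 ^ n))"
    by (rule pd_iff_ed[OF HC DC norms K(1) bpos gr gr']) auto
  show ?thesis using main unfolding Sigma_PD_def Sigma_ED_def C_def D_def B_def by simp
qed


end
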